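(* Let $a,b,e\in\mathbb{R}$ and let $\alpha_i(t)$ ($i=1,\dots,4$) be scalar continuous functions (not necessarily odd). (i) If $a(a+e)<0$, then the system $$\begin{aligned}\dot x&=(ax+by+xz)(1+\alpha_1(t))+x(a+z)\alpha_2(t)+y\alpha_3(t),\\ \dot y&=(-bx+ay+yz)(1+\alpha_1(t))+y(a+z)\alpha_2(t)-x\alpha_3(t),\\ \dot z&=(ez-x^2-y^2-z^2)(1+\alpha_1(t)+\alpha_2(t))\end{aligned}$$ has the solution $$x(t)=\sqrt{-a(a+e)}\,\sin\Big(bt+\int_0^t(b\alpha_1(s)+\alpha_3(s))\,ds\Big),\quad y(t)=\sqrt{-a(a+e)}\,\cos\Big(bt+\int_0^t(b\alpha_1(s)+\alpha_3(s))\,ds\Big),\quad z(t)=-a,$$ lying on the cycle $x^2+y^2=-a(a+e)$, $z=-a$. (ii) The system $$\begin{aligned}\dot x&=(ax+by+xz)(1+\alpha_1(t))+x(a+z)\alpha_2(t)+y\alpha_3(t)-y(x^2+y^2)(4az+x^2+y^2+2z^2)\alpha_4(t),\\ \dot y&=(-bx+ay+yz)(1+\alpha_1(t))+y(a+z)\alpha_2(t)-x\alpha_3(t)+x(x^2+y^2)(4az+x^2+y^2+2z^2)\alpha_4(t),\\ \dot z&=-(2az+x^2+y^2+z^2)(1+\alpha_1(t)+\alpha_2(t))\end{aligned}$$ has the solution $$x(t)=a\sin\Big(bt+\int_0^t(b\alpha_1(s)+\alpha_3(s)+a^4\alpha_4(s))\,ds\Big),\quad y(t)=a\cos\Big(bt+\int_0^t(b\alpha_1(s)+\alpha_3(s)+a^4\alpha_4(s))\,ds\Big),\quad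 z(t)=-a,$$ lying on the cycle $x^2+y^2=a^2$, $z=-a$. *)

theory Defs
  imports "HOL-Analysis.Analysis"
begin

end

theory Submission
  imports Defs
begin

lemma ftc_at:
  fixes g :: "real \<Rightarrow> real"
  assumes "continuous_on UNIV g"
  shows "((\<lambda>u. LBINT y=0..u. g y) has_real_derivative g x) (at x)"
proof -
  have "((\<lambda>u. LBINT y=0..u. g y) has_vector_derivative (g x)) (at x within {-\<bar>x\<bar>-1..\<bar>x\<bar>+1})"
    using interval_integral_FTC2[of "-\<bar>x\<bar>-1" 0 "\<bar>x\<bar>+1" g x] continuous_on_subset[OF assms]
    by (auto simp: zero_ereal_def)
  hence "((\<lambda>u. LBINT y=0..u. g y) has_vector_derivative (g x)) (at x within {-\<bar>x\<bar>-1<..<\<bar>x\<bar>+1})"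
    by (rule has_vector_derivative_within_subset) auto
  hence "((\<lambda>u. LBINT y=0..u. g y) has_vector_derivative (g x)) (at x)"
    by (subst (asm) at_within_open) auto
  thus ?thesis by (simp add: has_real_derivative_iff_has_vector_derivative)
qed
lemma h1x: fixes a b s c p q r' m :: real
 shows "m*(c*(b + (b*p + r'))) = (a*(m* s)+b*(m*c)+(m* s)*(-a))*(1+p) + (m* s)*(a+-a)*q + (m*c)*r'"
 by algebra
lemma h1y: fixes a b s c p q r' m :: real
 shows "m*(-s*(b + (b*p + r'))) = (-b*(m* s)+a*(m*c)+(m*c)*(-a))*(1+p) + (m*c)*(a+-a)*q - (m* s)*r'"
 by algebra
lemma h1z: fixes a e s c p q m :: real assumes "s^2+c^2=1" "m^2 = -a*(a+e)"
 shows "0 = (e*(-a) - (m* s)^2 - (m*c)^2 - (-a)^2)*(1+p+q)"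
 using assms by algebra
lemma h1s: fixes a e s c m :: real assumes "s^2+c^2=1" "m^2 = -a*(a+e)"
 shows "(m* s)^2 + (m*c)^2 = -a*(a+e)"
 using assms by algebra
lemma h2x: fixes a b s c p q r w :: real assumes "s^2+c^2=1"
 shows "a*(c*(b + (b*p + r + a^4*w))) = (a*(a* s)+b*(a*c)+(a* s)*(-a))*(1+p) + (a* s)*(a+-a)*q + (a*c)*r - (a*c)*((a* s)^2+(a*c)^2)*(4*a*(-a)+(a* s)^2+(a*c)^2+2*(-a)^2)*w"
 using assms by algebra
lemma h2y: fixes a b s c p q r w :: real assumes "s^2+c^2=1"
 shows "a*(-s*(b + (b*p + r + a^4*w))) = (-b*(a* s)+a*(a*c)+(a*c)*(-a))*(1+p) + (a*c)*(a+-a)*q - (a* s)*r + (a* s)*((a* s)^2+(a*c)^2)*(4*a*(-a)+(a* s)^2+(a*c)^2+2*(-a)^2)*w"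
 using assms by algebra
lemma h2z: fixes a s c p q :: real assumes "s^2+c^2=1"
 shows "0 = -(2*a*(-a)+(a* s)^2+(a*c)^2+(-a)^2)*(1+p+q)"
 using assms by algebra
lemma h2s: fixes a s c :: real assumes "s^2+c^2=1"
 shows "(a* s)^2+(a*c)^2 = a^2"
 using assms by algebra

theorem lemma1:
  fixes a b e :: real and \<alpha>1 \<alpha>2 \<alpha>3 \<alpha>4 :: "real \<Rightarrow> real"
  assumes "continuous_on UNIV \<alpha>1" and "continuous_on UNIV \<alpha>2"
      and "continuous_on UNIV \<alpha>3" and "continuous_on UNIV \<alpha>4"
  shows
   "(a * (a + e) < 0 \<longrightarrow>
      (let \<theta> = (\<lambda>t. b * t + (LBINT s=0..t. b * \<alpha>1 s + \<alpha>3 s));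
           x = (\<lambda>t. sqrt (- a * (a + e)) * sin (\<theta> t));
           y = (\<lambda>t. sqrt (- a * (a + e)) * cos (\<theta> t));
           z = (\<lambda>t::real. - a)
       in (\<forall>t. (x has_real_derivative
                  ((a * x t + b * y t + x t * z t) * (1 + \<alpha>1 t) + x t * (a + z t) * \<alpha>2 t
                    + y t * \<alpha>3 t)) (at t)
             \<and> (y has_real_derivative
                  ((- b * x t + a * y t + y t * z t) * (1 + \<alpha>1 t) + y t * (a + z t) * \<alpha>2 t
                    - x t * \<alpha>3 t)) (at t)
             \<and> (z has_real_derivative
                  ((e * z t - (x t)\<^sup>2 - (y t)\<^sup>2 - (z t)\<^sup>2) * (1 + \<alpha>1 t + \<alpha>2 t))) (at t)
             \<and> (x t)\<^sup>2 + (y t)\<^sup>2 = - a * (a + e) \<and> z t = - a)))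
    \<and>
    (let \<theta> = (\<lambda>t. b * t + (LBINT s=0..t. b * \<alpha>1 s + \<alpha>3 s + a ^ 4 * \<alpha>4 s));
         x = (\<lambda>t. a * sin (\<theta> t));
         y = (\<lambda>t. a * cos (\<theta> t));
         z = (\<lambda>t::real. - a)
     in (\<forall>t. (x has_real_derivative
                ((a * x t + b * y t + x t * z t) * (1 + \<alpha>1 t) + x t * (a + z t) * \<alpha>2 t
                  + y t * \<alpha>3 t
                  - y t * ((x t)\<^sup>2 + (y t)\<^sup>2) * (4 * a * z t + (x t)\<^sup>2 + (y t)\<^sup>2 + 2 * (z t)\<^sup>2) * \<alpha>4 t)) (at t)
           \<and> (y has_real_derivative
                ((- b * x t + a * y t + y t * z t) * (1 + \<alpha>1 t) + y t * (a + z t) * \<alpha>2 t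
                  - x t * \<alpha>3 t
                  + x t * ((x t)\<^sup>2 + (y t)\<^sup>2) * (4 * a * z t + (x t)\<^sup>2 + (y t)\<^sup>2 + 2 * (z t)\<^sup>2) * \<alpha>4 t)) (at t)
           \<and> (z has_real_derivative
                (- (2 * a * z t + (x t)\<^sup>2 + (y t)\<^sup>2 + (z t)\<^sup>2) * (1 + \<alpha>1 t + \<alpha>2 t))) (at t)
           \<and> (x t)\<^sup>2 + (y t)\<^sup>2 = a\<^sup>2 \<and> z t = - a))"
proof -
  have c1: "continuous_on UNIV (\<lambda>s. b * \<alpha>1 s + \<alpha>3 s)"
    using assms by (intro continuous_intros) auto
  have c2: "continuous_on UNIV (\<lambda>s. b * \<alpha>1 s + \<alpha>3 s + a ^ 4 * \<alpha>4 s)"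
    using assms by (intro continuous_intros) auto
  have th1: "((\<lambda>t. b * t + (LBINT s=0..t. b * \<alpha>1 s + \<alpha>3 s)) has_real_derivative
      (b + (b * \<alpha>1 t + \<alpha>3 t))) (at t)" for t
    by (intro derivative_intros ftc_at[OF c1]) auto
  have th2: "((\<lambda>t. b * t + (LBINT s=0..t. b * \<alpha>1 s + \<alpha>3 s + a ^ 4 * \<alpha>4 s)) has_real_derivative
      (b + (b * \<alpha>1 t + \<alpha>3 t + a ^ 4 * \<alpha>4 t))) (at t)" for t
    by (intro derivative_intros ftc_at[OF c2]) auto
  show ?thesis
  proof (intro conjI impI)
      assume h: "a * (a + e) < 0"
      define r where "r = sqrt (- a * (a + e))"
      have r2: "r^2 = - a * (a + e)" unfolding r_def using h by simp
      show "let \<theta> = (\<lambda>t. b * t + (LBINT s=0..t. b * \<alpha>1 s + \<alpha>3 s));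
           x = (\<lambda>t. sqrt (- a * (a + e)) * sin (\<theta> t));
           y = (\<lambda>t. sqrt (- a * (a + e)) * cos (\<theta> t));
           z = (\<lambda>t::real. - a)
       in (\<forall>t. (x has_real_derivative
                  ((a * x t + b * y t + x t * z t) * (1 + \<alpha>1 t) + x t * (a + z t) * \<alpha>2 t
                    + y t * \<alpha>3 t)) (at t)
             \<and> (y has_real_derivative
                  ((- b * x t + a * y t + y t * z t) * (1 + \<alpha>1 t) + y t * (a + z t) * \<alpha>2 t
                    - x t * \<alpha>3 t)) (at t)
             \<and> (z has_real_derivative
                  ((e * z t - (x t)\<^sup>2 - (y t)\<^sup>2 - (z t)\<^sup>2) * (1 + \<alpha>1 t + \<alpha>2 t))) (at t)
             \<and> (x t)\<^sup>2 + (y t)\<^sup>2 = - a * (a + e) \<and> z t = - a)"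
        unfolding Let_def r_def[symmetric]
        apply (intro allI conjI)
        subgoal for t
          by (rule DERIV_cmult[OF DERIV_fun_sin[OF th1], THEN DERIV_cong]) (rule h1x)
        subgoal for t
          by (rule DERIV_cmult[OF DERIV_fun_cos[OF th1], THEN DERIV_cong]) (rule h1y)
        subgoal for t
          by (rule DERIV_const[THEN DERIV_cong]) (rule h1z[OF sin_cos_squared_add r2])
        subgoal for t
          by (rule h1s[OF sin_cos_squared_add r2])
        by simp
  next
    show "let \<theta> = (\<lambda>t. b * t + (LBINT s=0..t. b * \<alpha>1 s + \<alpha>3 s + a ^ 4 * \<alpha>4 s));
         x = (\<lambda>t. a * sin (\<theta> t));
         y = (\<lambda>t. a * cos (\<theta> t));
         z = (\<lambda>t::real. - a)
     in (\<forall>t. (x has_real_derivative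
                ((a * x t + b * y t + x t * z t) * (1 + \<alpha>1 t) + x t * (a + z t) * \<alpha>2 t
                  + y t * \<alpha>3 t
                  - y t * ((x t)\<^sup>2 + (y t)\<^sup>2) * (4 * a * z t + (x t)\<^sup>2 + (y t)\<^sup>2 + 2 * (z t)\<^sup>2) * \<alpha>4 t)) (at t)
           \<and> (y has_real_derivative
                ((- b * x t + a * y t + y t * z t) * (1 + \<alpha>1 t) + y t * (a + z t) * \<alpha>2 t
                  - x t * \<alpha>3 t
                  + x t * ((x t)\<^sup>2 + (y t)\<^sup>2) * (4 * a * z t + (x t)\<^sup>2 + (y t)\<^sup>2 + 2 * (z t)\<^sup>2) * \<alpha>4 t)) (at t)
           \<and> (z has_real_derivative
                (- (2 * a * z t + (x t)\<^sup>2 + (y t)\<^sup>2 + (z t)\<^sup>2) * (1 + \<alpha>1 t + \<alpha>2 t))) (at t)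
           \<and> (x t)\<^sup>2 + (y t)\<^sup>2 = a\<^sup>2 \<and> z t = - a)"
      unfolding Let_def
      apply (intro allI conjI)
      subgoal for t
        by (rule DERIV_cmult[OF DERIV_fun_sin[OF th2], THEN DERIV_cong]) (rule h2x[OF sin_cos_squared_add])
      subgoal for t
        by (rule DERIV_cmult[OF DERIV_fun_cos[OF th2], THEN DERIV_cong]) (rule h2y[OF sin_cos_squared_add])
      subgoal for t
        by (rule DERIV_const[THEN DERIV_cong]) (rule h2z[OF sin_cos_squared_add])
      subgoal for t
        by (rule h2s[OF sin_cos_squared_add])
      by simp
  qed
qed

end
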